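(* Let $\lambda\subset\mathbb{H}$ be a (complex) Lagrangian subspace such that $h(v,v)\ge 0$ for every $v\in\lambda$. Then $\lambda$ is transverse to $H_1=H\oplus 0$, i.e. $\lambda\cap H_1=\{0\}$ and $\lambda+H_1=\mathbb{H}$.
   Context: $H$ is a complex (separable) Hilbert space with inner product $\langle\cdot,\cdot\rangle$ (antilinear in the second variable), $\tau$ is an isometric antilinear involution of $H$, and $(\xi,\eta)=\langle \xi,\tau\eta\rangle$ is the associated symmetric bilinear form. $\mathbb{H}=H\oplus H=\{\eta\oplus\xi\}$ with Hilbert inner product $\langle \eta\oplus\xi,\eta'\oplus\xi'\rangle=\langle\eta,\eta'\rangle+\langle\xi,\xi'\rangle$ and complex symplectic form $\omega(\eta\oplus\xi,\eta'\oplus\xi')=(\eta,\xi')-(\xi,\eta')$. For a subspace $F$, $F^{\circ}$ denotes its $\omega$-orthogonal; a Lagrangian is a subspace $\lambda$ with $\lambda^\circ=\lambda$. $H_1=H\oplus 0$, $H_2=0\oplus H$. The Hermitian form $h$ on $\mathbb{H}$ is $h(\eta\oplus\xi,\eta'\oplus\xi')=\langle\xi,\xi'\rangle-\langle\eta,\eta'\rangle$. *)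

theory Defs
  imports Complex_Main "HOL-Library.Product_Plus" "HOL-Library.Countable_Set"
begin

definition hnorm :: "('h \<Rightarrow> 'h \<Rightarrow> complex) \<Rightarrow> 'h \<Rightarrow> real" where
  "hnorm ip x = sqrt (Re (ip x x))"

definition complex_hilbert_space ::
  "(complex \<Rightarrow> 'h::ab_group_add \<Rightarrow> 'h) \<Rightarrow> ('h \<Rightarrow> 'h \<Rightarrow> complex) \<Rightarrow> bool" where
  "complex_hilbert_space smul ip \<longleftrightarrow>
     vector_space smul \<and>
     (\<forall>x y z. ip (x + y) z = ip x z + ip y z) \<and>
     (\<forall>c x y. ip (smul c x) y = c * ip x y) \<and>
     (\<forall>x y. ip y x = cnj (ip x y)) \<and>
     (\<forall>x. Re (ip x x) \<ge> 0) \<and>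
     (\<forall>x. ip x x = 0 \<longrightarrow> x = 0) \<and>
     \<comment> \<open>completeness\<close>
     (\<forall>X::nat \<Rightarrow> 'h. (\<forall>e>0. \<exists>N. \<forall>m\<ge>N. \<forall>n\<ge>N. hnorm ip (X m - X n) < e) \<longrightarrow>
         (\<exists>L. \<forall>e>0. \<exists>N. \<forall>n\<ge>N. hnorm ip (X n - L) < e)) \<and>
     \<comment> \<open>separability\<close>
     (\<exists>D. countable D \<and> (\<forall>x. \<forall>e>0. \<exists>d\<in>D. hnorm ip (x - d) < e))"

definition isometric_antilinear_involution ::
  "(complex \<Rightarrow> 'h::ab_group_add \<Rightarrow> 'h) \<Rightarrow> ('h \<Rightarrow> 'h \<Rightarrow> complex) \<Rightarrow> ('h \<Rightarrow> 'h) \<Rightarrow> bool" where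
  "isometric_antilinear_involution smul ip tau \<longleftrightarrow>
     (\<forall>x y. tau (x + y) = tau x + tau y) \<and>
     (\<forall>c x. tau (smul c x) = smul (cnj c) (tau x)) \<and>
     (\<forall>x. hnorm ip (tau x) = hnorm ip x) \<and>
     (\<forall>x. tau (tau x) = x)"

definition bform :: "('h \<Rightarrow> 'h \<Rightarrow> complex) \<Rightarrow> ('h \<Rightarrow> 'h) \<Rightarrow> 'h \<Rightarrow> 'h \<Rightarrow> complex" where
  "bform ip tau x y = ip x (tau y)"

text \<open>The doubled space HH = H (+) H is modelled as 'h \<times> 'h, the pair (eta, xi)
  standing for eta (+) xi.\<close>

definition pscale :: "(complex \<Rightarrow> 'h \<Rightarrow> 'h) \<Rightarrow> complex \<Rightarrow> 'h \<times> 'h \<Rightarrow> 'h \<times> 'h" where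
  "pscale smul c v = (smul c (fst v), smul c (snd v))"

definition complex_subspace :: "(complex \<Rightarrow> 'h::ab_group_add \<Rightarrow> 'h) \<Rightarrow> ('h \<times> 'h) set \<Rightarrow> bool" where
  "complex_subspace smul F \<longleftrightarrow> 0 \<in> F \<and> (\<forall>v\<in>F. \<forall>w\<in>F. v + w \<in> F) \<and>
     (\<forall>c. \<forall>v\<in>F. pscale smul c v \<in> F)"

definition omega :: "('h::ab_group_add \<Rightarrow> 'h \<Rightarrow> complex) \<Rightarrow> ('h \<Rightarrow> 'h) \<Rightarrow> 'h \<times> 'h \<Rightarrow> 'h \<times> 'h \<Rightarrow> complex" where
  "omega ip tau v w = bform ip tau (fst v) (snd w) - bform ip tau (snd v) (fst w)"

definition omega_orth :: "('h::ab_group_add \<Rightarrow> 'h \<Rightarrow> complex) \<Rightarrow> ('h \<Rightarrow> 'h) \<Rightarrow> ('h \<times> 'h) set \<Rightarrow> ('h \<times> 'h) set" where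
  "omega_orth ip tau F = {v. \<forall>w\<in>F. omega ip tau v w = 0}"

definition lagrangian :: "(complex \<Rightarrow> 'h::ab_group_add \<Rightarrow> 'h) \<Rightarrow> ('h \<Rightarrow> 'h \<Rightarrow> complex) \<Rightarrow> ('h \<Rightarrow> 'h) \<Rightarrow> ('h \<times> 'h) set \<Rightarrow> bool" where
  "lagrangian smul ip tau L \<longleftrightarrow> complex_subspace smul L \<and> omega_orth ip tau L = L"

definition hform :: "('h \<Rightarrow> 'h \<Rightarrow> complex) \<Rightarrow> 'h \<times> 'h \<Rightarrow> 'h \<times> 'h \<Rightarrow> complex" where
  "hform ip v w = ip (snd v) (snd w) - ip (fst v) (fst w)"

definition H1 :: "('h::zero \<times> 'h) set" where
  "H1 = {(x, 0) | x. True}"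

end

theory Submission
  imports Defs
begin

locale HS =
  fixes smul :: "complex \<Rightarrow> 'h::ab_group_add \<Rightarrow> 'h"
    and ip :: "'h \<Rightarrow> 'h \<Rightarrow> complex"
    and tau :: "'h \<Rightarrow> 'h"
  assumes HH: "complex_hilbert_space smul ip"
    and TT: "isometric_antilinear_involution smul ip tau"
begin

lemma vs: "vector_space smul" using HH unfolding complex_hilbert_space_def by blast

sublocale vector_space smul by (rule vs)

lemma ip_add_left: "ip (x + y) z = ip x z + ip y z"
  using HH unfolding complex_hilbert_space_def by blast
lemma ip_smul_left: "ip (smul c x) y = c * ip x y"
  using HH unfolding complex_hilbert_space_def by blast
lemma ip_sym: "ip y x = cnj (ip x y)"
  using HH unfolding complex_hilbert_space_def by blast
lemma ip_pos: "Re (ip x x) \<ge> 0"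
  using HH unfolding complex_hilbert_space_def by blast
lemma ip_zero: "ip x x = 0 \<Longrightarrow> x = 0"
  using HH unfolding complex_hilbert_space_def by blast
lemma complete: fixes X :: "nat \<Rightarrow> 'h" shows "(\<forall>e>0. \<exists>N. \<forall>m\<ge>N. \<forall>n\<ge>N. hnorm ip (X m - X n) < e) \<Longrightarrow>
         (\<exists>L. \<forall>e>0. \<exists>N. \<forall>n\<ge>N. hnorm ip (X n - L) < e)"
proof -
  assume a: "\<forall>e>0. \<exists>N. \<forall>m\<ge>N. \<forall>n\<ge>N. hnorm ip (X m - X n) < e"
  have "\<forall>X::nat \<Rightarrow> 'h. (\<forall>e>0. \<exists>N. \<forall>m\<ge>N. \<forall>n\<ge>N. hnorm ip (X m - X n) < e) \<longrightarrow>
         (\<exists>L. \<forall>e>0. \<exists>N. \<forall>n\<ge>N. hnorm ip (X n - L) < e)"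
    using HH unfolding complex_hilbert_space_def by (elim conjE)
  then show ?thesis using a by blast
qed

lemma tau_add: "tau (x + y) = tau x + tau y"
  using TT unfolding isometric_antilinear_involution_def by blast
lemma tau_smul: "tau (smul c x) = smul (cnj c) (tau x)"
  using TT unfolding isometric_antilinear_involution_def by blast
lemma tau_norm: "hnorm ip (tau x) = hnorm ip x"
  using TT unfolding isometric_antilinear_involution_def by blast
lemma tau_tau: "tau (tau x) = x"
  using TT unfolding isometric_antilinear_involution_def by blast

lemma tau_zero: "tau 0 = 0"
  using tau_add[of 0 0] by simp
lemma tau_minus: "tau (- x) = - tau x"
  using tau_add[of x "-x"] tau_zero by (simp add: eq_neg_iff_add_eq_0 add.commute)
lemma tau_diff: "tau (x - y) = tau x - tau y"
  using tau_add[of x "-y"] tau_minus by simp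

lemma ip_add_right: "ip x (y + z) = ip x y + ip x z"
  using ip_sym[of x "y+z"] ip_add_left[of y z x] ip_sym[of x y] ip_sym[of x z]
  by (metis complex_cnj_add complex_cnj_cnj)
lemma ip_smul_right: "ip x (smul c y) = cnj c * ip x y"
  by (metis complex_cnj_cnj complex_cnj_mult ip_smul_left ip_sym)
lemma ip_zero_left[simp]: "ip 0 y = 0"
  using ip_add_left[of 0 0 y] by simp
lemma ip_zero_right[simp]: "ip y 0 = 0"
  using ip_add_right[of y 0 0] by simp
lemma ip_minus_left: "ip (- x) y = - ip x y"
  using ip_add_left[of x "-x" y] by (simp add: eq_neg_iff_add_eq_0 add.commute)
lemma ip_minus_right: "ip y (- x) = - ip y x"
  using ip_add_right[of y x "-x"] by (simp add: eq_neg_iff_add_eq_0 add.commute)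
lemma ip_diff_left: "ip (x - z) y = ip x y - ip z y"
  using ip_add_left[of x "-z" y] ip_minus_left by simp
lemma ip_diff_right: "ip y (x - z) = ip y x - ip y z"
  using ip_add_right[of y x "-z"] ip_minus_right by simp

definition nn :: "'h \<Rightarrow> real" where "nn x = Re (ip x x)"

lemma nn_pos: "nn x \<ge> 0" unfolding nn_def by (rule ip_pos)
lemma ip_self: "ip x x = complex_of_real (nn x)"
  unfolding nn_def using ip_sym[of x x] by (simp add: complex_eq_iff)
lemma hnorm_nn: "hnorm ip x = sqrt (nn x)" unfolding hnorm_def nn_def ..
lemma nn_zero: "nn x = 0 \<Longrightarrow> x = 0" using ip_self ip_zero by simp
lemma nn_tau: "nn (tau x) = nn x"
  using tau_norm[of x] nn_pos[of x] nn_pos[of "tau x"] unfolding hnorm_nn by simp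

lemma ip_expand: "ip (x - smul c y) (x - smul c y) = ip x x - cnj c * ip x y - c * cnj (ip x y) + c * cnj c * ip y y"
  by (simp add: ip_diff_left ip_diff_right ip_smul_left ip_smul_right ip_sym[of y x] algebra_simps)

lemma nn_smul: "nn (smul c x) = (cmod c)^2 * nn x"
proof -
  have "ip (smul c x) (smul c x) = c * cnj c * ip x x"
    by (simp add: ip_smul_left ip_smul_right)
  also have "\<dots> = complex_of_real ((cmod c)^2 * nn x)"
    by (simp add: ip_self complex_mult_cnj cmod_power2)
  finally show ?thesis unfolding nn_def by simp
qed

lemma quad: "nn (x - smul (complex_of_real s * ip x y) y) = nn x - 2*s*(cmod (ip x y))^2 + s^2*(cmod (ip x y))^2 * nn y"
proof -
  define p where "p = ip x y"
  have pc: "cnj p * p = complex_of_real ((cmod p)^2)"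
    by (simp add: complex_mult_cnj cmod_power2 mult.commute)
  have pc': "p * cnj p = complex_of_real ((cmod p)^2)"
    using pc by (simp add: mult.commute)
  have a1: "cnj (complex_of_real s * p) * p = complex_of_real (s * (cmod p)^2)"
    using pc by (simp add: mult.assoc)
  have a2: "(complex_of_real s * p) * cnj p = complex_of_real (s * (cmod p)^2)"
    using pc' by (simp add: mult.assoc)
  have a3: "(complex_of_real s * p) * cnj (complex_of_real s * p) * ip y y = complex_of_real (s^2*(cmod p)^2 * nn y)"
  proof -
    have "(complex_of_real s * p) * cnj (complex_of_real s * p) * ip y y
        = complex_of_real s * complex_of_real s * (p * cnj p) * complex_of_real (nn y)"
      by (simp add: ip_self[of y] algebra_simps)
    also have "\<dots> = complex_of_real (s^2*(cmod p)^2 * nn y)" unfolding pc' by (simp add: power2_eq_square)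
    finally show ?thesis .
  qed
  have e: "ip (x - smul (complex_of_real s * p) y) (x - smul (complex_of_real s * p) y)
     = complex_of_real (nn x) - complex_of_real (s * (cmod p)^2) - complex_of_real (s * (cmod p)^2)
       + complex_of_real (s^2*(cmod p)^2 * nn y)"
    unfolding ip_expand p_def[symmetric] a1 a2 a3 ip_self[of x] ..
  show ?thesis unfolding nn_def p_def[symmetric] e by simp
qed

lemma cauchy_schwarz: "cmod (ip x y) \<le> hnorm ip x * hnorm ip y"
proof (cases "nn y = 0")
  case True
  then have "y = 0" using nn_zero by blast
  then show ?thesis by (simp add: hnorm_nn nn_pos)
next
  case False
  then have yp: "nn y > 0" using nn_pos[of y] by simp
  have "0 \<le> nn (x - smul (complex_of_real (1 / nn y) * ip x y) y)" by (rule nn_pos)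
  also have "\<dots> = nn x - (cmod (ip x y))^2 / nn y"
    unfolding quad using yp by (simp add: field_simps power2_eq_square)
  finally have "(cmod (ip x y))^2 \<le> nn x * nn y" using yp by (simp add: field_simps)
  then have "sqrt ((cmod (ip x y))^2) \<le> sqrt (nn x * nn y)" by (rule real_sqrt_le_mono)
  then show ?thesis by (simp add: hnorm_nn real_sqrt_mult)
qed

lemma nn_add: "nn (x + y) = nn x + nn y + 2 * Re (ip x y)"
proof -
  have "ip (x + y) (x + y) = ip x x + ip y y + (ip x y + cnj (ip x y))"
    by (simp add: ip_add_left ip_add_right ip_sym[of y x])
  then show ?thesis unfolding nn_def by simp
qed

lemma nn_diff: "nn (x - y) = nn x + nn y - 2 * Re (ip x y)"
proof -
  have "ip (x - y) (x - y) = ip x x + ip y y - (ip x y + cnj (ip x y))"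
    by (simp add: ip_diff_left ip_diff_right ip_sym[of y x])
  then show ?thesis unfolding nn_def by simp
qed

lemma hnorm_pos: "hnorm ip x \<ge> 0" by (simp add: hnorm_nn nn_pos)

lemma hnorm_triangle: "hnorm ip (x + y) \<le> hnorm ip x + hnorm ip y"
proof -
  have "Re (ip x y) \<le> hnorm ip x * hnorm ip y"
    using cauchy_schwarz[of x y] complex_Re_le_cmod[of "ip x y"] by linarith
  then have "nn (x + y) \<le> (hnorm ip x + hnorm ip y)^2"
    unfolding nn_add power2_sum using nn_pos by (simp add: hnorm_nn)
  then have "sqrt (nn (x + y)) \<le> sqrt ((hnorm ip x + hnorm ip y)^2)" by (rule real_sqrt_le_mono)
  then show ?thesis using hnorm_pos[of x] hnorm_pos[of y] by (simp add: hnorm_nn)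
qed

lemma hnorm_minus: "hnorm ip (- x) = hnorm ip x"
  by (simp add: hnorm_nn nn_def ip_minus_left ip_minus_right)

lemma hnorm_commute: "hnorm ip (x - y) = hnorm ip (y - x)"
  using hnorm_minus[of "x - y"] by simp

lemma parallelogram: "nn (x + y) + nn (x - y) = 2 * nn x + 2 * nn y"
  unfolding nn_add nn_diff by simp

lemma smul_minus_one: "smul (-1) x = - x" by simp

lemma tau_half: "tau (smul (1/2) x) = smul (1/2) (tau x)"
  by (simp add: tau_smul)

lemma two_half: "smul 2 (t - smul (1/2) z) = t + t - z"
proof -
  have "smul 2 (t - smul (1/2) z) = smul 2 t - smul (2 * (1/2)) z"
    by (simp add: scale_right_diff_distrib)
  also have "\<dots> = t + t - z" using scale_left_distrib[of 1 1 t] by simp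
  finally show ?thesis .
qed

lemma nn_commute: "nn (x - y) = nn (y - x)"
  using hnorm_commute[of x y] nn_pos[of "x-y"] nn_pos[of "y-x"] unfolding hnorm_nn by simp

lemma real_le_zero_lemma: fixes x K :: real assumes "0 \<le> K" "\<forall>e>0. x \<le> e * K" shows "x \<le> 0"
proof (rule ccontr)
  assume "\<not> x \<le> 0"
  then have x: "x > 0" by simp
  have "x / (K + 1) > 0" using x assms(1) by simp
  then have "x \<le> (x / (K + 1)) * K" using assms(2) by blast
  also have "\<dots> < x" using x assms(1) by (simp add: field_simps)
  finally show False by simp
qed

lemma real_le_lemma: fixes x c :: real assumes "\<forall>e>0. x < c + 2 * e" shows "x \<le> c"
proof (rule ccontr)
  assume "\<not> x \<le> c"
  then have "(x - c)/2 > 0" by simp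
  then have "x < c + 2 * ((x - c)/2)" using assms by blast
  then show False by (simp add: field_simps)
qed

end

locale HSL = HS smul ip tau
  for smul :: "complex \<Rightarrow> 'h::ab_group_add \<Rightarrow> 'h" and ip tau +
  fixes L :: "('h \<times> 'h) set"
  assumes lag: "lagrangian smul ip tau L"
    and posL: "\<forall>v\<in>L. Re (hform ip v v) \<ge> 0"
begin

lemma L_zero: "0 \<in> L" using lag unfolding lagrangian_def complex_subspace_def by blast
lemma L_add: "v \<in> L \<Longrightarrow> w \<in> L \<Longrightarrow> v + w \<in> L"
  using lag unfolding lagrangian_def complex_subspace_def by blast
lemma L_scale: "v \<in> L \<Longrightarrow> pscale smul c v \<in> L"
  using lag unfolding lagrangian_def complex_subspace_def by blast
lemma L_minus: "v \<in> L \<Longrightarrow> - v \<in> L"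
  using L_scale[of v "-1"] by (cases v) (simp add: pscale_def)
lemma L_diff: "v \<in> L \<Longrightarrow> w \<in> L \<Longrightarrow> v - w \<in> L"
  using L_add[of v "-w"] L_minus[of w] by simp
lemma L_orth: "v \<in> L \<longleftrightarrow> (\<forall>w\<in>L. omega ip tau v w = 0)"
  using lag unfolding lagrangian_def omega_orth_def by blast

lemma L_H1: "(x, 0) \<in> L \<Longrightarrow> x = 0"
proof -
  assume "(x, 0) \<in> L"
  then have "Re (hform ip (x,0) (x,0)) \<ge> 0" using posL by blast
  then have "nn x \<le> 0" by (simp add: hform_def nn_def)
  then show "x = 0" using nn_pos[of x] nn_zero by simp
qed

lemma L_fst_le: "v \<in> L \<Longrightarrow> nn (fst v) \<le> nn (snd v)"
  using posL by (auto simp: hform_def nn_def)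

lemma mid_bound:
  assumes a: "a \<in> L" and b: "b \<in> L" and d: "\<forall>w\<in>L. d \<le> nn (t - tau (snd w))"
  shows "nn (snd a - snd b) \<le> 2 * nn (t - tau (snd a)) + 2 * nn (t - tau (snd b)) - 4 * d"
proof -
  define u where "u = t - tau (snd a)"
  define u' where "u' = t - tau (snd b)"
  define mid where "mid = pscale smul (1/2) (a + b)"
  have midL: "mid \<in> L" unfolding mid_def using L_add[OF a b] by (rule L_scale)
  have "u + u' = t + t - (tau (snd a) + tau (snd b))" unfolding u_def u'_def by (simp add: algebra_simps)
  also have "\<dots> = smul 2 (t - tau (snd mid))"
    unfolding two_half[symmetric] mid_def pscale_def by (simp add: tau_half tau_add)
  finally have uu: "u + u' = smul 2 (t - tau (snd mid))" .
  have "nn (u + u') = 4 * nn (t - tau (snd mid))" unfolding uu nn_smul by simp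
  also have "\<dots> \<ge> 4 * d" using d midL by auto
  finally have s1: "nn (u + u') \<ge> 4 * d" .
  have "u - u' = tau (snd b - snd a)" unfolding u_def u'_def by (simp add: tau_diff)
  then have s2: "nn (u - u') = nn (snd a - snd b)" using nn_tau nn_commute by simp
  show ?thesis using parallelogram[of u u'] s1 s2 unfolding u_def[symmetric] u'_def[symmetric] by linarith
qed

lemma surj2: "\<exists>eta. (eta, y) \<in> L"
proof -
  define t where "t = tau y"
  define S where "S = {nn (t - tau (snd w)) | w. w \<in> L}"
  define d where "d = Inf S"
  have Sne: "S \<noteq> {}" using L_zero unfolding S_def by blast
  have Sbdd: "bdd_below S" unfolding S_def bdd_below_def using nn_pos by blast
  have dle: "\<forall>w\<in>L. d \<le> nn (t - tau (snd w))"
    unfolding d_def using cInf_lower[OF _ Sbdd] S_def by blast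
  have d0: "d \<ge> 0" unfolding d_def
    by (rule cInf_greatest[OF Sne]) (auto simp: S_def nn_pos)
  have "\<forall>n::nat. \<exists>w. w \<in> L \<and> nn (t - tau (snd w)) < d + 1/(real n+1)"
  proof
    fix n :: nat
    have "Inf S < d + 1/(real n+1)" unfolding d_def by (simp add: add_pos_nonneg)
    then obtain x where "x \<in> S" "x < d + 1/(real n+1)" using cInf_lessD[OF Sne] by blast
    then show "\<exists>w. w \<in> L \<and> nn (t - tau (snd w)) < d + 1/(real n+1)" unfolding S_def by blast
  qed
  from choice[OF this] obtain w where wL: "\<And>n. w n \<in> L"
    and wb: "\<And>n. nn (t - tau (snd (w n))) < d + 1/(real n+1)" by blast
  define X where "X n = fst (w n)" for n
  define Y where "Y n = snd (w n)" for n
  have bY: "nn (Y m - Y n) \<le> 2/(real m+1) + 2/(real n+1)" for m n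
    using mid_bound[OF wL wL dle, of m n] wb[of m] wb[of n] unfolding Y_def by linarith
  have bX: "nn (X m - X n) \<le> nn (Y m - Y n)" for m n
    using L_fst_le[OF L_diff[OF wL[of m] wL[of n]]] by (simp add: X_def Y_def)
  have cauchy: "\<forall>e>0. \<exists>N. \<forall>m\<ge>N. \<forall>n\<ge>N. hnorm ip (Y m - Y n) < e \<and> hnorm ip (X m - X n) < e"
  proof (intro allI impI)
    fix e :: real assume e: "e > 0"
    obtain N :: nat where N: "4 / e^2 < real N" using reals_Archimedean2 by blast
    have Ne: "4 / (real N + 1) < e^2"
    proof -
      have "4 < e^2 * real N" using N e by (simp add: field_simps)
      also have "\<dots> \<le> e^2 * (real N + 1)" using e by simp
      finally show ?thesis by (simp add: field_simps)
    qed
    show "\<exists>N. \<forall>m\<ge>N. \<forall>n\<ge>N. hnorm ip (Y m - Y n) < e \<and> hnorm ip (X m - X n) < e"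
    proof (intro exI allI impI)
      fix m n assume m: "N \<le> m" and n: "N \<le> n"
      have "2/(real m+1) \<le> 2/(real N+1)" using m by (simp add: frac_le)
      moreover have "2/(real n+1) \<le> 2/(real N+1)" using n by (simp add: frac_le)
      ultimately have "nn (Y m - Y n) < e^2" using bY[of m n] Ne by simp
      moreover have "nn (X m - X n) < e^2" using bX[of m n] calculation by simp
      ultimately have "sqrt (nn (Y m - Y n)) < sqrt (e^2)" "sqrt (nn (X m - X n)) < sqrt (e^2)"
        by (simp_all only: real_sqrt_less_iff)
      then show "hnorm ip (Y m - Y n) < e \<and> hnorm ip (X m - X n) < e"
        using e by (simp add: hnorm_nn)
    qed
  qed
  obtain eta where eta: "\<forall>e>0. \<exists>N. \<forall>n\<ge>N. hnorm ip (X n - eta) < e"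
    using complete[of X] cauchy by meson
  obtain m0 where m0: "\<forall>e>0. \<exists>N. \<forall>n\<ge>N. hnorm ip (Y n - m0) < e"
    using complete[of Y] cauchy by meson
  have both: "\<exists>n. hnorm ip (X n - eta) < e \<and> hnorm ip (Y n - m0) < e \<and> 1/(real n+1) < e^2"
    if e: "e > 0" for e
  proof -
    obtain N1 where N1: "\<forall>n\<ge>N1. hnorm ip (X n - eta) < e" using eta e by blast
    obtain N2 where N2: "\<forall>n\<ge>N2. hnorm ip (Y n - m0) < e" using m0 e by blast
    obtain N3 :: nat where N3: "1 / e^2 < real N3" using reals_Archimedean2 by blast
    define n where "n = max (max N1 N2) N3"
    have "1 < e^2 * real N3" using N3 e by (simp add: field_simps)
    also have "\<dots> \<le> e^2 * (real n + 1)" using e unfolding n_def by (simp add: mult_left_mono)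
    finally have "1/(real n+1) < e^2" by (simp add: field_simps)
    moreover have "n \<ge> N1" "n \<ge> N2" unfolding n_def by auto
    ultimately show ?thesis using N1 N2 by (intro exI[of _ n]) auto
  qed
  have etaL: "(eta, m0) \<in> L"
    unfolding L_orth[of "(eta,m0)"]
  proof
    fix v assume vL: "v \<in> L"
    let ?K = "hnorm ip (snd v) + hnorm ip (fst v)"
    have "\<forall>e>0. cmod (omega ip tau (eta,m0) v) \<le> e * ?K"
    proof (intro allI impI)
      fix e :: real assume "e > 0"
      then obtain n where n: "hnorm ip (X n - eta) < e" "hnorm ip (Y n - m0) < e" using both by blast
      have o: "omega ip tau (w n) v = 0" using L_orth wL vL by blast
      have "omega ip tau (eta,m0) v = omega ip tau (eta,m0) v - omega ip tau (w n) v" using o by simp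
      also have "\<dots> = ip (eta - X n) (tau (snd v)) - ip (m0 - Y n) (tau (fst v))"
        unfolding omega_def bform_def X_def Y_def by (simp add: ip_diff_left)
      finally have eq: "omega ip tau (eta,m0) v = ip (eta - X n) (tau (snd v)) - ip (m0 - Y n) (tau (fst v))" .
      have "cmod (omega ip tau (eta,m0) v) \<le> cmod (ip (eta - X n) (tau (snd v))) + cmod (ip (m0 - Y n) (tau (fst v)))"
        unfolding eq by (rule norm_triangle_ineq4)
      also have "\<dots> \<le> hnorm ip (eta - X n) * hnorm ip (snd v) + hnorm ip (m0 - Y n) * hnorm ip (fst v)"
        using cauchy_schwarz[of "eta - X n" "tau (snd v)"] cauchy_schwarz[of "m0 - Y n" "tau (fst v)"]
        by (simp add: tau_norm add_mono)
      also have "\<dots> \<le> e * hnorm ip (snd v) + e * hnorm ip (fst v)"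
        using n hnorm_commute[of eta "X n"] hnorm_commute[of m0 "Y n"] hnorm_pos[of "snd v"] hnorm_pos[of "fst v"]
        by (intro add_mono mult_right_mono) auto
      finally show "cmod (omega ip tau (eta,m0) v) \<le> e * ?K" by (simp add: algebra_simps)
    qed
    then have "cmod (omega ip tau (eta,m0) v) \<le> 0"
      by (intro real_le_zero_lemma[of ?K]) (simp_all add: hnorm_pos add_nonneg_nonneg)
    then show "omega ip tau (eta,m0) v = 0" by simp
  qed
  have mmin: "nn (t - tau m0) \<le> d"
  proof -
    have "\<forall>e>0. hnorm ip (t - tau m0) < sqrt d + 2 * e"
    proof (intro allI impI)
      fix e :: real assume e: "e > 0"
      then obtain n where n: "hnorm ip (Y n - m0) < e" "1/(real n+1) < e^2" using both by blast
      have "t - tau m0 = (t - tau (Y n)) + tau (Y n - m0)" by (simp add: tau_diff)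
      then have "hnorm ip (t - tau m0) \<le> hnorm ip (t - tau (Y n)) + hnorm ip (Y n - m0)"
        using hnorm_triangle tau_norm by metis
      moreover have "hnorm ip (t - tau (Y n)) \<le> sqrt d + e"
      proof -
        have "nn (t - tau (Y n)) \<le> (sqrt d + e)^2"
        proof -
          have "0 \<le> 2 * sqrt d * e" using d0 e by simp
          then show ?thesis using wb[of n] n(2) unfolding Y_def power2_sum using d0 by (simp add: algebra_simps)
        qed
        then have "sqrt (nn (t - tau (Y n))) \<le> sqrt ((sqrt d + e)^2)" by (rule real_sqrt_le_mono)
        then show ?thesis using d0 e by (simp add: hnorm_nn)
      qed
      ultimately show "hnorm ip (t - tau m0) < sqrt d + 2 * e" using n(1) by linarith
    qed
    then have "sqrt (nn (t - tau m0)) \<le> sqrt d" using real_le_lemma unfolding hnorm_nn by blast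
    then show ?thesis by simp
  qed
  define z where "z = t - tau m0"
  have zorth: "ip z (tau (snd v)) = 0" if vL: "v \<in> L" for v
  proof -
    define e where "e = tau (snd v)"
    define p where "p = ip z e"
    define s where "s = 1 / (nn e + 1)"
    define c where "c = complex_of_real s * p"
    have wL': "(eta, m0) + pscale smul (cnj c) v \<in> L" using L_add[OF etaL L_scale[OF vL]] .
    have eqz: "t - tau (snd ((eta, m0) + pscale smul (cnj c) v)) = z - smul c e"
      by (simp add: pscale_def z_def e_def tau_add tau_smul algebra_simps)
    have "d \<le> nn (t - tau (snd ((eta, m0) + pscale smul (cnj c) v)))" using dle wL' by blast
    then have "d \<le> nn (z - smul c e)" unfolding eqz .
    moreover have "nn z \<le> d" using mmin unfolding z_def .
    ultimately have "nn z \<le> nn (z - smul c e)" by linarith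
    then have ineq: "nn z \<le> nn z - 2*s*(cmod p)^2 + s^2*(cmod p)^2 * nn e"
      unfolding c_def p_def quad .
    have sp: "s > 0" unfolding s_def using nn_pos[of e] by simp
    have se: "s * nn e \<le> 1" unfolding s_def using nn_pos[of e] by (simp add: field_simps)
    define q where "q = (cmod p)^2"
    have q0: "q \<ge> 0" unfolding q_def by simp
    have "2*s*q \<le> (s*q) * (s * nn e)" using ineq unfolding q_def by (simp add: power2_eq_square algebra_simps)
    also have "\<dots> \<le> (s*q) * 1" using se sp q0 by (intro mult_left_mono) auto
    finally have "s * q \<le> 0" by (simp add: mult.commute)
    then have "q \<le> 0" using sp by (simp add: mult_le_0_iff)
    then have "q = 0" using q0 by simp
    then show ?thesis unfolding q_def p_def e_def by simp
  qed
  have "(z, 0) \<in> L"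
    unfolding L_orth[of "(z,0)"] using zorth by (simp add: omega_def bform_def)
  then have "z = 0" by (rule L_H1)
  then have "t = tau m0" unfolding z_def by simp
  then have "y = m0" using tau_tau unfolding t_def by metis
  then show ?thesis using etaL by blast
qed

theorem main: "L \<inter> H1 = {0} \<and> {v + w | v w. v \<in> L \<and> w \<in> H1} = UNIV"
proof
  show "L \<inter> H1 = {0}"
    using L_zero L_H1 by (auto simp: H1_def zero_prod_def)
  show "{v + w | v w. v \<in> L \<and> w \<in> H1} = UNIV"
  proof (rule set_eqI, rule iffI)
    fix x :: "'h \<times> 'h"
    obtain a b where ab: "x = (a, b)" by (cases x)
    obtain eta where "(eta, b) \<in> L" using surj2 by blast
    moreover have "(a - eta, 0) \<in> H1" unfolding H1_def by blast
    moreover have "x = (eta, b) + (a - eta, 0)" using ab by simp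
    ultimately show "x \<in> {v + w | v w. v \<in> L \<and> w \<in> H1}" by blast
  qed simp
qed

end

theorem proposition2p1:
  fixes smul :: "complex \<Rightarrow> 'h::ab_group_add \<Rightarrow> 'h"
    and ip :: "'h \<Rightarrow> 'h \<Rightarrow> complex"
    and tau :: "'h \<Rightarrow> 'h"
    and L :: "('h \<times> 'h) set"
  assumes "complex_hilbert_space smul ip"
    and "isometric_antilinear_involution smul ip tau"
    and "lagrangian smul ip tau L"
    and "\<forall>v\<in>L. Re (hform ip v v) \<ge> 0"
  shows "L \<inter> H1 = {0} \<and> {v + w | v w. v \<in> L \<and> w \<in> H1} = UNIV"
proof -
  interpret HSL smul ip tau L using assms by (unfold_locales) auto
  show ?thesis by (rule main)
qed

end
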